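(* Let $\mathcal{G}$ be a GBS graph of groups and $w=a_0^{k_0}y_1a_1^{k_1}\cdots y_na_n^{k_n}$ a $\mathcal{G}$-factorization. Define the relation $\sim_{\mathcal{C}}$ on $\{1,\dots,n\}$ by $i\sim_{\mathcal{C}}j$ iff $y_i=\bar y_j$ and: if $i<j$ then $\rho(w_{i,j-1})=0$ and $k_{i,j-1}\in\beta_{y_i}\mathbb{Z}$; if $j<i$ then $\rho(w_{j,i-1})=0$ and $k_{j,i-1}\in\beta_{y_j}\mathbb{Z}$. If $i\sim_{\mathcal{C}}\ell$, $\ell\sim_{\mathcal{C}}m$ and $m\sim_{\mathcal{C}}j$, then $i\sim_{\mathcal{C}}j$.
   Context: $\mathcal{G}$ consists of a finite connected graph $Y$ (vertices $V(Y)$, edges $E(Y)$, maps $\iota,\tau:E(Y)\to V(Y)$, fixed-point-free involution $y\mapsto\bar y$ with $\iota(\bar y)=\tau(y)$) and integers $\alpha_y,\beta_y\in\mathbb{Z}\setminus\{0\}$ with $\alpha_y=\beta_{\bar y}$. A $\mathcal{G}$-factorization is a word $a_0^{k_0}y_1a_1^{k_1}\cdots y_na_n^{k_n}$ with $y_i\in E(Y)$, $a_i\in V(Y)$, $k_i\in\mathbb{Z}$, $\iota(y_i)=a_{i-1}$, $\tau(y_i)=a_i$ and $a_n=a_0$. For $0\le i\le j\le n$: $w_{i,j}=a_i^{k_i}y_{i+1}a_{i+1}^{k_{i+1}}\cdots y_ja_j^{k_j}$ and $k_{i,j}=\sum_{\nu=i}^{j}k_\nu\prod_{\mu=i+1}^{\nu}\alpha_{y_\mu}/\beta_{y_\mu}\in\mathbb{Q}$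 (so $k_{i,j}\in\beta\mathbb{Z}$ means $k_{i,j}$ is an integer multiple of $\beta$). Fix an orientation $D\subseteq E(Y)$ (containing exactly one of $y,\bar y$ for each edge $y$); $\rho$ maps words over $E(Y)\cup\{a^k\}$ to $\mathbb{Z}^D$ additively, with $\rho(a^k)=0$, $\rho(y)=e_y$ and $\rho(\bar y)=-e_y$ for $y\in D$ ($e_y$ the unit vector at $y$); i.e. $\rho$ counts exponent sums of edges. *)

theory Defs
  imports Main "HOL.Rat"
begin

definition gbs_graph ::
  "'v set \<Rightarrow> 'e set \<Rightarrow> ('e \<Rightarrow> 'v) \<Rightarrow> ('e \<Rightarrow> 'v) \<Rightarrow> ('e \<Rightarrow> 'e)
   \<Rightarrow> ('e \<Rightarrow> int) \<Rightarrow> ('e \<Rightarrow> int) \<Rightarrow> bool" where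
  "gbs_graph V E \<iota> \<tau> bar \<alpha> \<beta> \<longleftrightarrow>
     finite V \<and> finite E \<and> V \<noteq> {} \<and>
     (\<forall>y\<in>E. \<iota> y \<in> V \<and> \<tau> y \<in> V \<and> bar y \<in> E \<and> bar y \<noteq> y \<and> bar (bar y) = y
              \<and> \<iota> (bar y) = \<tau> y
              \<and> \<alpha> y \<noteq> 0 \<and> \<beta> y \<noteq> 0 \<and> \<alpha> y = \<beta> (bar y)) \<and>
     (\<forall>u\<in>V. \<forall>v\<in>V. (u, v) \<in> {(\<iota> y, \<tau> y) | y. y \<in> E}\<^sup>*)"

definition orientation :: "'e set \<Rightarrow> ('e \<Rightarrow> 'e) \<Rightarrow> 'e set \<Rightarrow> bool" where
  "orientation E bar D \<longleftrightarrow> D \<subseteq> E \<and> (\<forall>y\<in>E. (y \<in> D) \<noteq> (bar y \<in> D))"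

text \<open>A G-factorization a_0^{k_0} y_1 a_1^{k_1} ... y_n a_n^{k_n}, given by
  sequences a (indices 0..n), k (indices 0..n), y (indices 1..n).\<close>

definition gbs_factorization ::
  "'v set \<Rightarrow> 'e set \<Rightarrow> ('e \<Rightarrow> 'v) \<Rightarrow> ('e \<Rightarrow> 'v)
   \<Rightarrow> nat \<Rightarrow> (nat \<Rightarrow> 'v) \<Rightarrow> (nat \<Rightarrow> int) \<Rightarrow> (nat \<Rightarrow> 'e) \<Rightarrow> bool" where
  "gbs_factorization V E \<iota> \<tau> n a k y \<longleftrightarrow>
     (\<forall>i\<le>n. a i \<in> V) \<and>
     (\<forall>i\<in>{1..n}. y i \<in> E \<and> \<iota> (y i) = a (i - 1) \<and> \<tau> (y i) = a i) \<and>
     a n = a 0"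

text \<open>rho of a single edge: the unit vector e_y if y in D, and -e_{bar y} otherwise
  (as a function on edges supported on D).\<close>

definition rho_edge :: "'e set \<Rightarrow> ('e \<Rightarrow> 'e) \<Rightarrow> 'e \<Rightarrow> 'e \<Rightarrow> int" where
  "rho_edge D bar y e = (if y \<in> D then (if e = y then 1 else 0)
                         else (if e = bar y then -1 else 0))"

text \<open>rho(w_{i,j}) = sum of rho(y_mu) for mu = i+1..j (the vertex powers contribute 0).\<close>

definition rho_sub :: "'e set \<Rightarrow> ('e \<Rightarrow> 'e) \<Rightarrow> (nat \<Rightarrow> 'e) \<Rightarrow> nat \<Rightarrow> nat \<Rightarrow> 'e \<Rightarrow> int" where
  "rho_sub D bar y i j e = (\<Sum>\<mu>\<in>{i+1..j}. rho_edge D bar (y \<mu>) e)"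

definition rho_sub_zero :: "'e set \<Rightarrow> ('e \<Rightarrow> 'e) \<Rightarrow> (nat \<Rightarrow> 'e) \<Rightarrow> nat \<Rightarrow> nat \<Rightarrow> bool" where
  "rho_sub_zero D bar y i j \<longleftrightarrow> (\<forall>e\<in>D. rho_sub D bar y i j e = 0)"

definition kk :: "('e \<Rightarrow> int) \<Rightarrow> ('e \<Rightarrow> int) \<Rightarrow> (nat \<Rightarrow> int) \<Rightarrow> (nat \<Rightarrow> 'e) \<Rightarrow> nat \<Rightarrow> nat \<Rightarrow> rat" where
  "kk \<alpha> \<beta> k y i j = (\<Sum>\<nu>\<in>{i..j}. of_int (k \<nu>) *
       (\<Prod>\<mu>\<in>{i+1..\<nu>}. of_int (\<alpha> (y \<mu>)) / of_int (\<beta> (y \<mu>))))"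

definition in_multZ :: "rat \<Rightarrow> int \<Rightarrow> bool" where
  "in_multZ q b \<longleftrightarrow> (\<exists>m::int. q = of_int (b * m))"

definition simC ::
  "'e set \<Rightarrow> ('e \<Rightarrow> 'e) \<Rightarrow> ('e \<Rightarrow> int) \<Rightarrow> ('e \<Rightarrow> int)
   \<Rightarrow> nat \<Rightarrow> (nat \<Rightarrow> int) \<Rightarrow> (nat \<Rightarrow> 'e) \<Rightarrow> nat \<Rightarrow> nat \<Rightarrow> bool" where
  "simC D bar \<alpha> \<beta> n k y i j \<longleftrightarrow>
     i \<in> {1..n} \<and> j \<in> {1..n} \<and> y i = bar (y j) \<and>
     (i < j \<longrightarrow> rho_sub_zero D bar y i (j - 1) \<and> in_multZ (kk \<alpha> \<beta> k y i (j - 1)) (\<beta> (y i))) \<and>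
     (j < i \<longrightarrow> rho_sub_zero D bar y j (i - 1) \<and> in_multZ (kk \<alpha> \<beta> k y j (i - 1)) (\<beta> (y j)))"

end

theory Submission
  imports Defs
begin

locale GL =
  fixes V :: "'v set" and E :: "'e set" and \<iota> \<tau> :: "'e \<Rightarrow> 'v" and bar :: "'e \<Rightarrow> 'e"
    and \<alpha> \<beta> :: "'e \<Rightarrow> int" and D :: "'e set"
    and n :: nat and a :: "nat \<Rightarrow> 'v" and k :: "nat \<Rightarrow> int" and y :: "nat \<Rightarrow> 'e"
  assumes G: "gbs_graph V E \<iota> \<tau> bar \<alpha> \<beta>"
    and O: "orientation E bar D"
    and F: "gbs_factorization V E \<iota> \<tau> n a k y"
begin

lemma yE: "\<mu> \<in> {1..n} \<Longrightarrow> y \<mu> \<in> E"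
  using F unfolding gbs_factorization_def by auto

lemma gE: "e \<in> E \<Longrightarrow> bar e \<in> E \<and> bar e \<noteq> e \<and> bar (bar e) = e \<and> \<alpha> e \<noteq> 0 \<and> \<beta> e \<noteq> 0 \<and> \<alpha> e = \<beta> (bar e)"
  using G unfolding gbs_graph_def by auto

lemma DE: "D \<subseteq> E" using O unfolding orientation_def by auto
lemma finD: "finite D" using DE G unfolding gbs_graph_def by (auto intro: finite_subset)
lemma orient: "e \<in> E \<Longrightarrow> (e \<in> D) \<noteq> (bar e \<in> D)" using O unfolding orientation_def by auto

definition r :: "'e \<Rightarrow> rat" where "r e = of_int (\<alpha> e) / of_int (\<beta> e)"
definition Rf :: "nat \<Rightarrow> 'e \<Rightarrow> int" where "Rf t e = (\<Sum>\<mu>=1..t. rho_edge D bar (y \<mu>) e)"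
definition Pf :: "nat \<Rightarrow> rat" where "Pf t = (\<Prod>\<mu>=1..t. r (y \<mu>))"
definition Kf :: "nat \<Rightarrow> rat" where "Kf t = (\<Sum>\<nu><t. of_int (k \<nu>) * Pf \<nu>)"
definition Q :: "nat \<Rightarrow> rat" where "Q t = Kf t / (Pf t * of_int (\<beta> (y t)))"

lemma r_nz: "e \<in> E \<Longrightarrow> r e \<noteq> 0" using gE[of e] by (simp add: r_def)

lemma r_bar: "e \<in> E \<Longrightarrow> r (bar e) = of_int (\<beta> e) / of_int (\<alpha> e)"
proof -
  assume e: "e \<in> E"
  then have "\<alpha> (bar e) = \<beta> (bar (bar e))" using gE[of "bar e"] gE[of e] by auto
  then show ?thesis using gE[of e] e by (simp add: r_def)
qed

lemma rho_bar: "e \<in> E \<Longrightarrow> rho_edge D bar (bar e) x = - rho_edge D bar e x"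
proof -
  assume e: "e \<in> E"
  have bb: "bar (bar e) = e" and ne: "bar e \<noteq> e" using gE[OF e] by auto
  show ?thesis
  proof (cases "e \<in> D")
    case True
    then have "bar e \<notin> D" using orient[OF e] by auto
    then show ?thesis using True bb ne unfolding rho_edge_def by auto
  next
    case False
    then have "bar e \<in> D" using orient[OF e] by auto
    then show ?thesis using False bb ne unfolding rho_edge_def by auto
  qed
qed

lemma Rf_Suc: "Rf (Suc t) e = Rf t e + rho_edge D bar (y (Suc t)) e"
  unfolding Rf_def by (simp add: sum.cl_ivl_Suc)

lemma Pf_Suc: "Pf (Suc t) = Pf t * r (y (Suc t))"
  unfolding Pf_def by (simp add: prod.cl_ivl_Suc)

lemma rho_sub_eq: "i \<le> j \<Longrightarrow> rho_sub D bar y i j e = Rf j e - Rf i e"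
proof (induction j)
  case 0 then show ?case by (simp add: rho_sub_def Rf_def)
next
  case (Suc j)
  show ?case
  proof (cases "i = Suc j")
    case True then show ?thesis by (simp add: rho_sub_def)
  next
    case False
    then have "i \<le> j" using Suc.prems by auto
    then show ?thesis using Suc.IH unfolding rho_sub_def Rf_Suc
      by (simp add: sum.cl_ivl_Suc)
  qed
qed

lemma Pf_split: "i \<le> j \<Longrightarrow> Pf j = Pf i * (\<Prod>\<mu>\<in>{i+1..j}. r (y \<mu>))"
proof (induction j)
  case 0 then show ?case by (simp add: Pf_def)
next
  case (Suc j)
  show ?case
  proof (cases "i = Suc j")
    case True then show ?thesis by simp
  next
    case False
    then have "i \<le> j" using Suc.prems by auto
    then show ?thesis using Suc.IH unfolding Pf_Suc
      by (simp add: prod.cl_ivl_Suc)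
  qed
qed

lemma Pf_nz: "t \<le> n \<Longrightarrow> Pf t \<noteq> 0"
proof (induction t)
  case 0 then show ?case by (simp add: Pf_def)
next
  case (Suc t) then show ?case using r_nz[OF yE[of "Suc t"]] by (simp add: Pf_Suc)
qed

lemma prod_rho: "e \<in> E \<Longrightarrow> (\<Prod>x\<in>D. r x powi rho_edge D bar e x) = r e"
proof -
  assume e: "e \<in> E"
  show ?thesis
  proof (cases "e \<in> D")
    case True
    have "(\<Prod>x\<in>D. r x powi rho_edge D bar e x) = (\<Prod>x\<in>D. if x = e then r e else 1)"
      by (rule prod.cong) (auto simp: rho_edge_def True)
    also have "\<dots> = r e" using True finD by (simp add: prod.delta)
    finally show ?thesis .
  next
    case False
    then have bD: "bar e \<in> D" using orient[OF e] by auto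
    have "(\<Prod>x\<in>D. r x powi rho_edge D bar e x) = (\<Prod>x\<in>D. if x = bar e then inverse (r (bar e)) else 1)"
      by (rule prod.cong) (auto simp: rho_edge_def False power_int_minus)
    also have "\<dots> = inverse (r (bar e))" using bD finD by (simp add: prod.delta)
    also have "\<dots> = r e" using r_bar[OF e] by (simp add: r_def)
    finally show ?thesis .
  qed
qed

lemma Pf_R: "t \<le> n \<Longrightarrow> Pf t = (\<Prod>x\<in>D. r x powi Rf t x)"
proof (induction t)
  case 0 then show ?case by (simp add: Pf_def Rf_def)
next
  case (Suc t)
  have ye: "y (Suc t) \<in> E" using Suc.prems by (intro yE) auto
  have "(\<Prod>x\<in>D. r x powi Rf (Suc t) x)
      = (\<Prod>x\<in>D. r x powi Rf t x * r x powi rho_edge D bar (y (Suc t)) x)"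
    unfolding Rf_Suc
    by (rule prod.cong) (use DE r_nz in \<open>auto simp: power_int_add\<close>)
  also have "\<dots> = Pf t * r (y (Suc t))"
    using Suc prod_rho[OF ye] by (simp add: prod.distrib)
  finally show ?case by (simp add: Pf_Suc)
qed

lemma kk_eq: "i \<le> j \<Longrightarrow> Pf i * kk \<alpha> \<beta> k y i j = Kf (Suc j) - Kf i"
proof -
  assume ij: "i \<le> j"
  have "Pf i * kk \<alpha> \<beta> k y i j = (\<Sum>\<nu>\<in>{i..j}. of_int (k \<nu>) * Pf \<nu>)"
    unfolding kk_def sum_distrib_left
    by (rule sum.cong) (auto simp: Pf_split r_def)
  also have "\<dots> = (\<Sum>\<nu>\<in>{i..<Suc j}. of_int (k \<nu>) * Pf \<nu>)"
    by (simp add: atLeastLessThanSuc_atLeastAtMost)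
  also have "\<dots> = Kf (Suc j) - Kf i"
  proof -
    have eq: "(\<Sum>\<nu>\<in>{0..<i}. of_int (k \<nu>) * Pf \<nu>) + (\<Sum>\<nu>\<in>{i..<Suc j}. of_int (k \<nu>) * Pf \<nu>)
       = (\<Sum>\<nu>\<in>{0..<Suc j}. of_int (k \<nu>) * Pf \<nu>)"
      by (rule sum.atLeastLessThan_concat) (use ij in auto)
    show ?thesis unfolding Kf_def lessThan_atLeast0 eq[symmetric] by simp
  qed
  finally show ?thesis .
qed

lemma Pf_eqR: "s \<le> n \<Longrightarrow> t \<le> n \<Longrightarrow> \<forall>x\<in>D. Rf s x = Rf t x \<Longrightarrow> Pf s = Pf t"
  by (simp add: Pf_R cong: prod.cong)

lemma Rf_step: "1 \<le> t \<Longrightarrow> Rf t x = Rf (t-1) x + rho_edge D bar (y t) x"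
  using Rf_Suc[of "t-1" x] by simp

lemma rsz: "i \<le> j \<Longrightarrow> rho_sub_zero D bar y i j \<longleftrightarrow> (\<forall>x\<in>D. Rf j x = Rf i x)"
  by (simp add: rho_sub_zero_def rho_sub_eq)

definition Gr :: "nat \<Rightarrow> nat \<Rightarrow> bool" where
  "Gr i j \<longleftrightarrow> i \<in> {1..n} \<and> j \<in> {1..n} \<and> y i = bar (y j) \<and>
     (\<forall>x\<in>D. Rf i x = Rf (j-1) x \<and> Rf (i-1) x = Rf j x) \<and> Q i - Q j \<in> \<int>"

lemma half:
  assumes ij: "i < j" and i: "i \<in> {1..n}" and j: "j \<in> {1..n}" and yy: "y i = bar (y j)"
  shows "(rho_sub_zero D bar y i (j-1) \<and> in_multZ (kk \<alpha> \<beta> k y i (j-1)) (\<beta> (y i)))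
     \<longleftrightarrow> (\<forall>x\<in>D. Rf i x = Rf (j-1) x \<and> Rf (i-1) x = Rf j x) \<and> Q i - Q j \<in> \<int>"
proof -
  have yi: "y i \<in> E" and yj: "y j \<in> E" using i j yE by auto
  have byi: "bar (y i) = y j" using yy gE[OF yj] by auto
  have bj: "\<beta> (y j) = \<alpha> (y i)" using gE[OF yi] byi by auto
  have aj: "\<alpha> (y j) = \<beta> (y i)" using gE[OF yj] yy by auto
  have ai0: "\<alpha> (y i) \<noteq> 0" and bi0: "\<beta> (y i) \<noteq> 0" using gE[OF yi] by auto
  have rz: "rho_sub_zero D bar y i (j-1) \<longleftrightarrow> (\<forall>x\<in>D. Rf (j-1) x = Rf i x)"
    using ij by (intro rsz) auto
  have R: "(\<forall>x\<in>D. Rf (j-1) x = Rf i x) \<longleftrightarrow> (\<forall>x\<in>D. Rf i x = Rf (j-1) x \<and> Rf (i-1) x = Rf j x)"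
  proof -
    have "Rf j x = Rf (j-1) x - rho_edge D bar (y i) x" "Rf i x = Rf (i-1) x + rho_edge D bar (y i) x" for x
      using Rf_step[of j x] Rf_step[of i x] rho_bar[OF yi, of x] byi i j by auto
    then show ?thesis by auto
  qed
  show ?thesis
  proof (cases "\<forall>x\<in>D. Rf (j-1) x = Rf i x")
    case False then show ?thesis using rz R by auto
  next
    case True
    have Pj1: "Pf (j-1) = Pf i" using Pf_eqR[of "j-1" i] True i j by auto
    have Pj: "Pf j = Pf (j-1) * r (y j)" using Pf_Suc[of "j-1"] j by auto
    have rj: "r (y j) = of_int (\<beta> (y i)) / of_int (\<alpha> (y i))" using aj bj by (simp add: r_def)
    have Pi0: "Pf i \<noteq> 0" using Pf_nz i by auto
    have PB: "Pf j * of_int (\<beta> (y j)) = Pf i * of_int (\<beta> (y i))"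
      using Pj Pj1 rj bj ai0 by simp
    have KK: "Pf i * kk \<alpha> \<beta> k y i (j-1) = Kf j - Kf i"
      using kk_eq[of i "j-1"] ij by auto
    have "Q j - Q i = (Kf j - Kf i) / (Pf i * of_int (\<beta> (y i)))"
      unfolding Q_def PB by (simp add: diff_divide_distrib)
    also have "\<dots> = kk \<alpha> \<beta> k y i (j-1) / of_int (\<beta> (y i))"
      unfolding KK[symmetric] using Pi0 by simp
    finally have QQ: "Q i - Q j = - (kk \<alpha> \<beta> k y i (j-1) / of_int (\<beta> (y i)))" by simp
    have M: "in_multZ (kk \<alpha> \<beta> k y i (j-1)) (\<beta> (y i)) \<longleftrightarrow> kk \<alpha> \<beta> k y i (j-1) / of_int (\<beta> (y i)) \<in> \<int>"
    proof
      assume "in_multZ (kk \<alpha> \<beta> k y i (j-1)) (\<beta> (y i))"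
      then obtain m where "kk \<alpha> \<beta> k y i (j-1) = of_int (\<beta> (y i) * m)" unfolding in_multZ_def by auto
      then have "kk \<alpha> \<beta> k y i (j-1) / of_int (\<beta> (y i)) = of_int m" using bi0 by simp
      then show "kk \<alpha> \<beta> k y i (j-1) / of_int (\<beta> (y i)) \<in> \<int>" by simp
    next
      assume "kk \<alpha> \<beta> k y i (j-1) / of_int (\<beta> (y i)) \<in> \<int>"
      then obtain m where "kk \<alpha> \<beta> k y i (j-1) / of_int (\<beta> (y i)) = of_int m" by (auto elim: Ints_cases)
      then have "kk \<alpha> \<beta> k y i (j-1) = of_int (\<beta> (y i) * m)" using bi0 by (simp add: divide_eq_eq)
      then show "in_multZ (kk \<alpha> \<beta> k y i (j-1)) (\<beta> (y i))" unfolding in_multZ_def by blast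
    qed
    have "Q i - Q j \<in> \<int> \<longleftrightarrow> kk \<alpha> \<beta> k y i (j-1) / of_int (\<beta> (y i)) \<in> \<int>"
      unfolding QQ using minus_in_Ints_iff by blast
    then show ?thesis using True rz R M by auto
  qed
qed

lemma simC_Gr: "simC D bar \<alpha> \<beta> n k y i j \<longleftrightarrow> Gr i j"
proof (cases "i = j")
  case True
  have "\<not> (i \<in> {1..n} \<and> y i = bar (y i))" using gE yE by metis
  then show ?thesis unfolding simC_def Gr_def True by auto
next
  case False
  show ?thesis
  proof (cases "i < j")
    case True
    show ?thesis
    proof (cases "i \<in> {1..n} \<and> j \<in> {1..n} \<and> y i = bar (y j)")
      case c: True
      show ?thesis using half[OF True] c True unfolding simC_def Gr_def by auto
    next
      case False then show ?thesis unfolding simC_def Gr_def by auto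
    qed
  next
    case ji: False
    then have ji: "j < i" using \<open>i \<noteq> j\<close> by auto
    show ?thesis
    proof (cases "i \<in> {1..n} \<and> j \<in> {1..n} \<and> y i = bar (y j)")
      case c: True
      have "y j = bar (y i)" using c gE yE by metis
      then have h: "(rho_sub_zero D bar y j (i-1) \<and> in_multZ (kk \<alpha> \<beta> k y j (i-1)) (\<beta> (y j)))
     \<longleftrightarrow> (\<forall>x\<in>D. Rf j x = Rf (i-1) x \<and> Rf (j-1) x = Rf i x) \<and> Q j - Q i \<in> \<int>"
        using half[OF ji] c by auto
      have "Q j - Q i \<in> \<int> \<longleftrightarrow> Q i - Q j \<in> \<int>"
        by (metis minus_diff_eq minus_in_Ints_iff)
      then show ?thesis using h c ji unfolding simC_def Gr_def by auto
    next
      case False then show ?thesis unfolding simC_def Gr_def by auto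
    qed
  qed
qed

lemma Gr_trans3: "Gr i l \<Longrightarrow> Gr l m \<Longrightarrow> Gr m j \<Longrightarrow> Gr i j"
proof -
  assume A: "Gr i l" and B: "Gr l m" and C: "Gr m j"
  have ym: "y m \<in> E" using B yE unfolding Gr_def by auto
  have "y i = bar (bar (y m))" using A B unfolding Gr_def by auto
  then have yim: "y i = y m" using gE[OF ym] by auto
  have q: "Q i - Q j = (Q i - Q l) + (Q l - Q m) + (Q m - Q j)" by simp
  have "Q i - Q j \<in> \<int>" unfolding q using A B C unfolding Gr_def by (intro Ints_add) auto
  then show ?thesis using A B C yim unfolding Gr_def by auto
qed

end

theorem lemma3p4:
  fixes V :: "'v set" and E :: "'e set" and \<iota> \<tau> :: "'e \<Rightarrow> 'v" and bar :: "'e \<Rightarrow> 'e"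
    and \<alpha> \<beta> :: "'e \<Rightarrow> int" and D :: "'e set"
    and n :: nat and a :: "nat \<Rightarrow> 'v" and k :: "nat \<Rightarrow> int" and y :: "nat \<Rightarrow> 'e"
    and i l m j :: nat
  assumes "gbs_graph V E \<iota> \<tau> bar \<alpha> \<beta>"
    and "orientation E bar D"
    and "gbs_factorization V E \<iota> \<tau> n a k y"
    and "simC D bar \<alpha> \<beta> n k y i l"
    and "simC D bar \<alpha> \<beta> n k y l m"
    and "simC D bar \<alpha> \<beta> n k y m j"
  shows "simC D bar \<alpha> \<beta> n k y i j"
proof -
  interpret GL V E \<iota> \<tau> bar \<alpha> \<beta> D n a k y using assms(1-3) by unfold_locales
  show ?thesis using assms(4-6) Gr_trans3 by (simp add: simC_Gr)
qed

end
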